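(* Let $\mathbf{c}\in\mathbb{R}^2$, let $\mathbf{e}_\pm\in\mathbb{R}^2$ be unit vectors with $\mathbf{e}_+\cdot\mathbf{e}_-=\cos(2\theta)$ where $2\theta\in(0,2\pi)$, let $\Gamma_\pm:=\{\mathbf{c}+t\mathbf{e}_\pm:t>0\}$ and $\Gamma:=\overline{\Gamma}_-\cup\overline{\Gamma}_+$. For $p,\tilde p\in\mathscr{C}^\infty_0(\mathbb{R}_+)$ define $\Theta_\Gamma(p,\tilde p)$ on $\Gamma$ by $\Theta_\Gamma(p,\tilde p)(\mathbf{c}+t\mathbf{e}_\pm):=(p(t)\pm\tilde p(t))/\sqrt2$ for $t>0$, and define $\langle\mathscr{A}_\Gamma(u),v\rangle_\Gamma:=\int_{\Gamma\times\Gamma}u(\mathbf{y})v(\mathbf{x})|\mathbf{x}-\mathbf{y}|^{-1/2}\,d\mathbf{x}\,d\mathbf{y}$. For $\alpha\in[0,2\pi)$ let $\mathfrak{K}_\alpha(\tau):=\big(4\sin^2(\alpha)+(\sqrt\tau-1/\sqrt\tau)^2\big)^{-1/4}$, $\tau>0$, and define $\mathscr{A}^\pm_\theta$ by $$\langle\mathscr{A}^\pm_\theta(p),q\rangle_{\mathbb{R}_+}:=\int_{\mathbb{R}_+\times\mathbb{R}_+}\big(\mathfrak{K}_0(t/s)\pm\mathfrak{K}_\theta(t/s)\big)p(s)q(t)(st)^{-1/4}\,ds\,dt.$$ Then for all $p,\tilde p,q,\tilde q\in\mathscr{C}^\infty_0(\mathbb{R}_+)$, $$\langle\mathscr{A}_\Gamma\Theta_\Gamma(p,\tilde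 p),\Theta_\Gamma(q,\tilde q)\rangle_\Gamma=\langle\mathscr{A}^+_\theta(p),q\rangle_{\mathbb{R}_+}+\langle\mathscr{A}^-_\theta(\tilde p),\tilde q\rangle_{\mathbb{R}_+}.$$
   Context: $\mathscr{C}^\infty_0(\mathbb{R}_+)$ denotes the smooth functions on $\mathbb{R}_+=[0,\infty)$ whose support is bounded and contained in $(0,+\infty)$. Integrals over $\Gamma$ are with respect to arc length. *)

theory Defs
  imports "HOL-Analysis.Analysis"
begin

text \<open>Test functions: smooth on (0,\<infinity>), support bounded and contained in (0,\<infinity>).
  Only the values at t > 0 matter.\<close>
definition C0inf_Rplus :: "(real \<Rightarrow> real) \<Rightarrow> bool" where
  "C0inf_Rplus p \<longleftrightarrow>
     (\<forall>k::nat. \<forall>t>0. ((deriv ^^ k) p) differentiable (at t)) \<and>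
     (\<exists>a b. 0 < a \<and> a \<le> b \<and> (\<forall>t>0. (t < a \<or> b < t) \<longrightarrow> p t = 0))"

text \<open>Ray-union \<Gamma> = closure of {c + t e+} \<union> closure of {c + t e-}, and the function
  \<Theta>_\<Gamma>(p, pt) on \<Gamma> (the value at the vertex c, a null set, is set to 0).\<close>
definition Theta_Gamma ::
  "real^2 \<Rightarrow> real^2 \<Rightarrow> real^2 \<Rightarrow> (real \<Rightarrow> real) \<Rightarrow> (real \<Rightarrow> real) \<Rightarrow> real^2 \<Rightarrow> real" where
  "Theta_Gamma c ep em p pt x =
     (if \<exists>t>0. x = c + t *\<^sub>R ep then
        (let t = (THE t. t > 0 \<and> x = c + t *\<^sub>R ep) in (p t + pt t) / sqrt 2)
      else if \<exists>t>0. x = c + t *\<^sub>R em then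
        (let t = (THE t. t > 0 \<and> x = c + t *\<^sub>R em) in (p t - pt t) / sqrt 2)
      else 0)"

text \<open>Integral over \<Gamma> \<times> \<Gamma> w.r.t. arc length (on each factor), computed through the
  arc-length parametrisations t \<mapsto> c + t e_pm, t > 0, of the two rays (the vertex is a null set).\<close>
definition Gamma_Gamma_integral ::
  "real^2 \<Rightarrow> real^2 \<Rightarrow> real^2 \<Rightarrow> (real^2 \<Rightarrow> real^2 \<Rightarrow> real) \<Rightarrow> real" where
  "Gamma_Gamma_integral c ep em F =
     (\<Sum>a\<in>{True, False}. \<Sum>b\<in>{True, False}.
        (LINT z : {0<..} \<times> {0<..} | lborel \<Otimes>\<^sub>M lborel.
           F (c + fst z *\<^sub>R (if a then ep else em)) (c + snd z *\<^sub>R (if b then ep else em))))"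

definition A_Gamma_pairing ::
  "real^2 \<Rightarrow> real^2 \<Rightarrow> real^2 \<Rightarrow> (real^2 \<Rightarrow> real) \<Rightarrow> (real^2 \<Rightarrow> real) \<Rightarrow> real" where
  "A_Gamma_pairing c ep em u v =
     Gamma_Gamma_integral c ep em (\<lambda>y x. u y * v x * norm (x - y) powr (-1/2))"

definition frakK :: "real \<Rightarrow> real \<Rightarrow> real" where
  "frakK \<alpha> \<tau> = (4 * (sin \<alpha>)^2 + (sqrt \<tau> - 1 / sqrt \<tau>)^2) powr (-1/4)"

text \<open>\<langle>A^\<plusminus>_\<theta> p, q\<rangle>_{R+}; \<sigma> = 1 for +, \<sigma> = -1 for -. The pair z = (s,t).\<close>
definition A_theta_pairing ::
  "real \<Rightarrow> real \<Rightarrow> (real \<Rightarrow> real) \<Rightarrow> (real \<Rightarrow> real) \<Rightarrow> real" where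
  "A_theta_pairing \<sigma> \<theta> p q =
     (LINT z : {0<..} \<times> {0<..} | lborel \<Otimes>\<^sub>M lborel.
        (frakK 0 (snd z / fst z) + \<sigma> * frakK \<theta> (snd z / fst z)) * p (fst z) * q (snd z)
          * (fst z * snd z) powr (-1/4))"

end

theory Submission imports Defs begin

lemma sing_int:
  fixes a b :: real assumes ab: "a \<le> b"
  shows "integrable (lborel \<Otimes>\<^sub>M lborel)
     (\<lambda>z. indicator ({a..b}\<times>{a..b}) z * \<bar>snd z - fst z\<bar> powr (-1/2))"
proof -
  define L where "L = b - a"
  have L0: "0 \<le> L" using ab by (simp add: L_def)
  define g where "g u = indicator {0..L} u * u powr (-1/2)" for u :: real
  have gm[measurable]: "g \<in> borel_measurable borel" unfolding g_def by measurable
  have g0: "0 \<le> g u" for u unfolding g_def by (simp add: indicator_def)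
  have G: "(\<integral>\<^sup>+u. ennreal (g u) \<partial>lborel) = ennreal (L powr (1/2) / (1/2))"
    using nn_integral_has_integral_lebesgue[of "{0..L}" "\<lambda>x. x powr (-1/2)",
       OF _ has_integral_powr_from_0[of "-1/2" L]] L0
    unfolding g_def by simp
  define G where "G = ennreal (L powr (1/2) / (1/2))"
  have tr: "(\<integral>\<^sup>+t. ennreal (g (t - s)) \<partial>lborel) = G" for s
    using nn_integral_real_affine[of "\<lambda>u. ennreal (g u)" 1 "-s"] G by (simp add: G_def)
  have rf: "(\<integral>\<^sup>+t. ennreal (g (s - t)) \<partial>lborel) = G" for s
    using nn_integral_real_affine[of "\<lambda>u. ennreal (g u)" "-1" "s"] G by (simp add: G_def)
  have inner: "(\<integral>\<^sup>+t. ennreal (indicator {a..b} t * \<bar>t - s\<bar> powr (-1/2)) \<partial>lborel) \<le> 2 * G"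
    if s: "s \<in> {a..b}" for s
  proof -
    have "(\<integral>\<^sup>+t. ennreal (indicator {a..b} t * \<bar>t - s\<bar> powr (-1/2)) \<partial>lborel)
        \<le> (\<integral>\<^sup>+t. ennreal (g (t - s)) + ennreal (g (s - t)) \<partial>lborel)"
    proof (intro nn_integral_mono)
      fix t
      show "ennreal (indicator {a..b} t * \<bar>t - s\<bar> powr (-1/2)) \<le> ennreal (g (t - s)) + ennreal (g (s - t))"
      proof (cases "t \<in> {a..b}")
        case True
        then have "\<bar>t - s\<bar> powr (-1/2) \<le> g (t - s) + g (s - t)"
          using s by (cases "s \<le> t") (auto simp: g_def indicator_def L_def)
        then show ?thesis using True g0
          by (simp add: ennreal_plus[symmetric] del: ennreal_plus)
      qed simp
    qed
    also have "\<dots> = 2 * G"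
      by (subst nn_integral_add) (auto simp: tr rf mult_2)
    finally show ?thesis .
  qed
  have hm[measurable]: "(\<lambda>z. indicator ({a..b}\<times>{a..b}) z * \<bar>snd z - fst z\<bar> powr (-1/2)::real)
      \<in> borel_measurable (lborel \<Otimes>\<^sub>M lborel)" by measurable
  show ?thesis
  proof (rule integrableI_bounded)
    have "(\<integral>\<^sup>+z. ennreal (norm (indicator ({a..b}\<times>{a..b}) z * \<bar>snd z - fst z\<bar> powr (-1/2))) \<partial>(lborel \<Otimes>\<^sub>M lborel))
       = (\<integral>\<^sup>+s. \<integral>\<^sup>+t. ennreal (indicator ({a..b}\<times>{a..b}) (s,t) * \<bar>t - s\<bar> powr (-1/2)) \<partial>lborel \<partial>lborel)"
      using lborel.nn_integral_fst[where f="\<lambda>z. ennreal (indicator ({a..b}\<times>{a..b}) z * \<bar>snd z - fst z\<bar> powr (-1/2))"]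
      by (simp add: abs_mult)
    also have "\<dots> \<le> (\<integral>\<^sup>+s. indicator {a..b} s * (2 * G) \<partial>lborel)"
    proof (intro nn_integral_mono)
      fix s
      show "(\<integral>\<^sup>+t. ennreal (indicator ({a..b}\<times>{a..b}) (s,t) * \<bar>t - s\<bar> powr (-1/2)) \<partial>lborel)
          \<le> indicator {a..b} s * (2 * G)"
      proof (cases "s \<in> {a..b}")
        case True
        then show ?thesis using inner[OF True]
          by (simp add: indicator_def split_beta' mem_Times_iff)
      next
        case False
        then have "\<And>t. indicator ({a..b}\<times>{a..b}) (s,t) = (0::real)" by (auto simp: indicator_def)
        then show ?thesis using False by simp
      qed
    qed
    also have "\<dots> = 2 * G * emeasure lborel {a..b}"
      by (simp add: nn_integral_cmult_indicator mult.commute)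
    also have "\<dots> < \<infinity>" using ab by (simp add: G_def ennreal_mult_less_top)
    finally show "(\<integral>\<^sup>+z. ennreal (norm (indicator ({a..b}\<times>{a..b}) z * \<bar>snd z - fst z\<bar> powr (-1/2))) \<partial>(lborel \<Otimes>\<^sub>M lborel)) < \<infinity>" .
  qed (rule hm)
qed


definition nice :: "(real \<Rightarrow> real) \<Rightarrow> bool" where
  "nice f \<longleftrightarrow> continuous_on {0<..} f \<and>
     (\<exists>a b. 0 < a \<and> a \<le> b \<and> (\<forall>t>0. (t < a \<or> b < t) \<longrightarrow> f t = 0))"

lemma nice_lin:
  assumes "nice f" "nice g"
  shows "nice (\<lambda>s. (f s + \<sigma> * g s) * r)"
proof -
  obtain a1 b1 where 1: "0 < a1" "a1 \<le> b1" "\<forall>t>0. (t < a1 \<or> b1 < t) \<longrightarrow> f t = 0"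
    using assms(1) unfolding nice_def by blast
  obtain a2 b2 where 2: "0 < a2" "a2 \<le> b2" "\<forall>t>0. (t < a2 \<or> b2 < t) \<longrightarrow> g t = 0"
    using assms(2) unfolding nice_def by blast
  have "continuous_on {0<..} (\<lambda>s. (f s + \<sigma> * g s) * r)"
    using assms unfolding nice_def by (intro continuous_intros) auto
  moreover have "\<forall>t>0. (t < min a1 a2 \<or> max b1 b2 < t) \<longrightarrow> (f t + \<sigma> * g t) * r = 0"
    using 1 2 by auto
  ultimately show ?thesis unfolding nice_def using 1 2
    by (intro conjI exI[of _ "min a1 a2"] exI[of _ "max b1 b2"]) auto
qed

lemma C0_nice:
  assumes "C0inf_Rplus p" shows "nice p"
proof -
  have "\<forall>t>0. p differentiable (at t)"
    using assms unfolding C0inf_Rplus_def by (metis funpow_0)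
  then have "continuous_on {0<..} p"
    by (intro continuous_at_imp_continuous_on) (auto intro: differentiable_imp_continuous_within)
  then show ?thesis using assms unfolding C0inf_Rplus_def nice_def by blast
qed

lemma core_int:
  fixes k :: "real \<times> real \<Rightarrow> real"
  assumes f: "nice f" and g: "nice g"
    and km[measurable]: "k \<in> borel_measurable (lborel \<Otimes>\<^sub>M lborel)"
    and kb: "\<And>a b. 0 < a \<Longrightarrow> \<exists>C. \<forall>s\<in>{a..b}. \<forall>t\<in>{a..b}. \<bar>k (s,t)\<bar> \<le> \<bar>t - s\<bar> powr (-1/2) + C"
  shows "set_integrable (lborel \<Otimes>\<^sub>M lborel) ({0<..}\<times>{0<..}) (\<lambda>z. f (fst z) * g (snd z) * k z)"
proof -
  obtain a1 b1 where 1: "0 < a1" "a1 \<le> b1" "\<forall>t>0. (t < a1 \<or> b1 < t) \<longrightarrow> f t = 0"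
    using f unfolding nice_def by blast
  obtain a2 b2 where 2: "0 < a2" "a2 \<le> b2" "\<forall>t>0. (t < a2 \<or> b2 < t) \<longrightarrow> g t = 0"
    using g unfolding nice_def by blast
  define a where "a = min a1 a2"
  define b where "b = max b1 b2"
  have a0: "0 < a" and ab: "a \<le> b" using 1 2 by (auto simp: a_def b_def)
  have fz: "f t = 0" if "t > 0" "t < a \<or> b < t" for t using 1 that by (auto simp: a_def b_def)
  have gz: "g t = 0" if "t > 0" "t < a \<or> b < t" for t using 2 that by (auto simp: a_def b_def)
  have sub: "{a..b} \<subseteq> {0<..}" using a0 by auto
  have "compact (f ` {a..b})"
    using f sub unfolding nice_def by (intro compact_continuous_image) (auto intro: continuous_on_subset)
  then obtain Mf where Mf: "\<forall>x\<in>{a..b}. norm (f x) \<le> Mf"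
    using compact_imp_bounded bounded_iff by (metis imageI)
  have "compact (g ` {a..b})"
    using g sub unfolding nice_def by (intro compact_continuous_image) (auto intro: continuous_on_subset)
  then obtain Mg where Mg: "\<forall>x\<in>{a..b}. norm (g x) \<le> Mg"
    using compact_imp_bounded bounded_iff by (metis imageI)
  define M where "M = max (max Mf Mg) 0"
  have M0: "0 \<le> M" by (simp add: M_def)
  have fM: "\<bar>f x\<bar> \<le> M" if "x \<in> {a..b}" for x using Mf that by (force simp: M_def)
  have gM: "\<bar>g x\<bar> \<le> M" if "x \<in> {a..b}" for x using Mg that by (force simp: M_def)
  obtain C where C: "\<forall>s\<in>{a..b}. \<forall>t\<in>{a..b}. \<bar>k (s,t)\<bar> \<le> \<bar>t - s\<bar> powr (-1/2) + C"
    using kb[OF a0] by blast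
  define C' where "C' = max C 0"
  define F where "F s = indicator {0<..} s *\<^sub>R f s" for s
  define G where "G s = indicator {0<..} s *\<^sub>R g s" for s
  have Fm[measurable]: "F \<in> borel_measurable borel"
    unfolding F_def using f unfolding nice_def by (intro borel_measurable_continuous_on_indicator) auto
  have Gm[measurable]: "G \<in> borel_measurable borel"
    unfolding G_def using g unfolding nice_def by (intro borel_measurable_continuous_on_indicator) auto
  have eq: "(\<lambda>z. indicator ({0<..}\<times>{0<..}) z *\<^sub>R (f (fst z) * g (snd z) * k z))
      = (\<lambda>z. F (fst z) * G (snd z) * k z)"
    by (auto simp: F_def G_def indicator_times)
  define B where "B = {a..b} \<times> {a..b}"
  have Bs: "B \<in> sets (lborel \<Otimes>\<^sub>M lborel)" unfolding B_def by measurable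
  have Bfin: "emeasure (lborel \<Otimes>\<^sub>M lborel) B < \<infinity>"
    unfolding B_def using ab by (subst lborel.emeasure_pair_measure_Times) (auto simp: ennreal_mult_less_top)
  have dom: "integrable (lborel \<Otimes>\<^sub>M lborel)
      (\<lambda>z. M * M * (indicator B z * \<bar>snd z - fst z\<bar> powr (-1/2) + C' * indicator B z))"
    using sing_int[OF ab] Bs Bfin unfolding B_def by (intro integrable_mult_right integrable_add) auto
  show ?thesis
    unfolding set_integrable_def eq
  proof (rule Bochner_Integration.integrable_bound[OF dom])
    show "(\<lambda>z. F (fst z) * G (snd z) * k z) \<in> borel_measurable (lborel \<Otimes>\<^sub>M lborel)"
      by measurable
    show "AE z in lborel \<Otimes>\<^sub>M lborel. norm (F (fst z) * G (snd z) * k z)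
       \<le> norm (M * M * (indicator B z * \<bar>snd z - fst z\<bar> powr (-1/2) + C' * indicator B z))"
    proof (intro AE_I2)
      fix z :: "real \<times> real"
      obtain s t where z: "z = (s,t)" by (cases z)
      have rhs0: "0 \<le> M * M * (indicator B z * \<bar>snd z - fst z\<bar> powr (-1/2) + C' * indicator B z)"
        using M0 by (intro mult_nonneg_nonneg add_nonneg_nonneg) (auto simp: C'_def)
      have "\<bar>F s * G t * k (s,t)\<bar> \<le> M * M * (indicator B z * \<bar>t - s\<bar> powr (-1/2) + C' * indicator B z)"
      proof (cases "s > 0 \<and> t > 0")
        case False
        then show ?thesis using rhs0 z by (auto simp: F_def G_def)
      next
        case True
        show ?thesis
        proof (cases "z \<in> B")
          case False
          then have "f s = 0 \<or> g t = 0" using True fz gz z by (auto simp: B_def)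
          then show ?thesis using rhs0 z by (auto simp: F_def G_def)
        next
          case inB: True
          then have st: "s \<in> {a..b}" "t \<in> {a..b}" using z by (auto simp: B_def)
          have "\<bar>F s * G t * k (s,t)\<bar> = \<bar>f s\<bar> * \<bar>g t\<bar> * \<bar>k (s,t)\<bar>"
            using True by (simp add: F_def G_def abs_mult)
          also have "\<dots> \<le> M * M * (\<bar>t - s\<bar> powr (-1/2) + C')"
            using fM[OF st(1)] gM[OF st(2)] C st M0
            by (intro mult_mono) (force simp: C'_def)+
          finally show ?thesis using inB z by (simp add: algebra_simps)
        qed
      qed
      then show "norm (F (fst z) * G (snd z) * k z)
       \<le> norm (M * M * (indicator B z * \<bar>snd z - fst z\<bar> powr (-1/2) + C' * indicator B z))"
        using rhs0 z by simp
    qed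
  qed
qed


lemma pw: "0 \<le> (y::real) \<Longrightarrow> y powr (-1/2) = (y^2) powr (-1/4)"
proof (cases "y = 0")
  case False
  assume "0 \<le> y"
  then have "y > 0" using False by simp
  then have "(y^2) powr (-1/4) = (y powr 2) powr (-1/4)" by (simp add: powr_realpow)
  also have "\<dots> = y powr (-1/2)" by (simp add: powr_powr)
  finally show ?thesis by simp
qed simp

lemma Kgen:
  assumes s: "0 < s" and t: "0 < t"
  shows "frakK \<alpha> (t/s) * (s*t) powr (-1/4) = (4 * sin \<alpha>^2 * s * t + (t-s)^2) powr (-1/4)"
proof -
  have sq: "(sqrt (t/s) - 1 / sqrt (t/s))^2 = t/s - 2 + s/t"
    using s t by (simp add: power2_diff real_sqrt_divide power_divide field_simps power2_eq_square)
  have "4 * sin \<alpha>^2 + (sqrt (t/s) - 1 / sqrt (t/s))^2 = (4 * sin \<alpha>^2 * s * t + (t-s)^2) / (s*t)"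
    unfolding sq using s t by (simp add: field_simps power2_eq_square)
  then have "frakK \<alpha> (t/s) = ((4 * sin \<alpha>^2 * s * t + (t-s)^2) / (s*t)) powr (-1/4)"
    by (simp add: frakK_def)
  also have "\<dots> = (4 * sin \<alpha>^2 * s * t + (t-s)^2) powr (-1/4) / (s*t) powr (-1/4)"
    by (rule powr_divide)
  finally show ?thesis using s t by simp
qed

lemma Kid0:
  assumes "0 < s" "0 < t"
  shows "frakK 0 (t/s) * (s*t) powr (-1/4) = \<bar>t - s\<bar> powr (-1/2)"
  using Kgen[OF assms, of 0] pw[of "\<bar>t - s\<bar>"] by simp

lemma Kid1:
  assumes "0 < s" "0 < t"
  shows "frakK \<theta> (t/s) * (s*t) powr (-1/4) = (t^2 + s^2 - 2 * t * s * cos (2 * \<theta>)) powr (-1/4)"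
proof -
  have "4 * sin \<theta>^2 * s * t + (t-s)^2 = t^2 + s^2 - 2 * t * s * cos (2 * \<theta>)"
    unfolding cos_double_sin by (simp add: power2_diff algebra_simps)
  then show ?thesis using Kgen[OF assms, of \<theta>] by simp
qed

lemma nsame:
  fixes e c :: "real^2" assumes "norm e = 1"
  shows "norm ((c + t *\<^sub>R e) - (c + s *\<^sub>R e)) = \<bar>t - s\<bar>"
proof -
  have "(c + t *\<^sub>R e) - (c + s *\<^sub>R e) = (t - s) *\<^sub>R e" by (simp add: algebra_simps)
  then show ?thesis using assms by simp
qed

lemma ncross:
  fixes e1 e2 c :: "real^2" assumes "norm e1 = 1" "norm e2 = 1"
  shows "norm ((c + t *\<^sub>R e1) - (c + s *\<^sub>R e2)) powr (-1/2)
       = (t^2 + s^2 - 2 * t * s * (e1 \<bullet> e2)) powr (-1/4)"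
proof -
  have "(c + t *\<^sub>R e1) - (c + s *\<^sub>R e2) = t *\<^sub>R e1 - s *\<^sub>R e2" by (simp add: algebra_simps)
  moreover have "norm (t *\<^sub>R e1 - s *\<^sub>R e2) ^ 2 = t^2 + s^2 - 2 * t * s * (e1 \<bullet> e2)"
  proof -
    have e11: "e1 \<bullet> e1 = 1" by (metis assms(1) power2_norm_eq_inner one_power2)
    have e22: "e2 \<bullet> e2 = 1" by (metis assms(2) power2_norm_eq_inner one_power2)
    have "(t *\<^sub>R e1 - s *\<^sub>R e2) \<bullet> (t *\<^sub>R e1 - s *\<^sub>R e2) = t^2 + s^2 - 2 * t * s * (e1 \<bullet> e2)"
      by (simp add: inner_diff_left inner_diff_right e11 e22 inner_commute[of e2 e1] power2_eq_square algebra_simps)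
    then show ?thesis by (simp add: power2_norm_eq_inner)
  qed
  ultimately show ?thesis using pw[of "norm (t *\<^sub>R e1 - s *\<^sub>R e2)"] by simp
qed


lemma nsame':
  fixes e :: "real^2" assumes "norm e = 1"
  shows "norm (t *\<^sub>R e - s *\<^sub>R e) = \<bar>t - s\<bar>"
  using nsame[OF assms, of 0] by simp

lemma ncross':
  fixes e1 e2 :: "real^2" assumes "norm e1 = 1" "norm e2 = 1"
  shows "norm (t *\<^sub>R e1 - s *\<^sub>R e2) powr (- (1/2))
       = (t^2 + s^2 - 2 * t * s * (e1 \<bullet> e2)) powr (- (1/4))"
  using ncross[OF assms, of 0] by simp

lemma alg:
  fixes a b c d k0 k1 r :: real
  assumes "r * r = 1/2"
  shows "((a + 1 * b) * r) * ((c + 1 * d) * r) * k0 + ((a + 1 * b) * r) * ((c + (-1) * d) * r) * k1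
     + ((a + (-1) * b) * r) * ((c + 1 * d) * r) * k1 + ((a + (-1) * b) * r) * ((c + (-1) * d) * r) * k0
     = (a * c * k0 + a * c * k1) + (b * d * k0 - b * d * k1)"
proof -
  have "((a + 1 * b) * r) * ((c + 1 * d) * r) * k0 + ((a + 1 * b) * r) * ((c + (-1) * d) * r) * k1
     + ((a + (-1) * b) * r) * ((c + 1 * d) * r) * k1 + ((a + (-1) * b) * r) * ((c + (-1) * d) * r) * k0
     = (r * r) * (2 * ((a * c * k0 + a * c * k1) + (b * d * k0 - b * d * k1)))"
    by (simp add: algebra_simps)
  then show ?thesis using assms by simp
qed

lemma int0:
  assumes "nice f" "nice g"
  shows "set_integrable (lborel \<Otimes>\<^sub>M lborel) ({0<..}\<times>{0<..})
     (\<lambda>z. f (fst z) * g (snd z) * \<bar>snd z - fst z\<bar> powr (-1/2))"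
  by (rule core_int[OF assms]) (measurable, auto intro!: exI[of _ 0])

lemma int1:
  assumes "nice f" "nice g" and co: "co < 1"
  shows "set_integrable (lborel \<Otimes>\<^sub>M lborel) ({0<..}\<times>{0<..})
     (\<lambda>z. f (fst z) * g (snd z) * ((snd z)^2 + (fst z)^2 - 2 * snd z * fst z * co) powr (-1/4))"
proof (rule core_int[OF assms(1,2)])
  show "(\<lambda>z. ((snd z)^2 + (fst z)^2 - 2 * snd z * fst z * co) powr (-1/4)) \<in> borel_measurable (lborel \<Otimes>\<^sub>M lborel)"
    by measurable
  fix a b :: real assume a: "0 < a"
  define \<delta> where "\<delta> = 2 * a^2 * (1 - co)"
  have d0: "0 < \<delta>" using a co by (simp add: \<delta>_def)
  show "\<exists>C. \<forall>s\<in>{a..b}. \<forall>t\<in>{a..b}. \<bar>(\<lambda>z. ((snd z)^2 + (fst z)^2 - 2 * snd z * fst z * co) powr (-1/4)) (s,t)\<bar>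
      \<le> \<bar>t - s\<bar> powr (-1/2) + C"
  proof (intro exI[of _ "\<delta> powr (-1/4)"] ballI)
    fix s t assume s: "s \<in> {a..b}" and t: "t \<in> {a..b}"
    have "a * a \<le> s * t" using s t a by (intro mult_mono) auto
    then have "\<delta> \<le> 2 * s * t * (1 - co)" using co by (simp add: \<delta>_def power2_eq_square)
    also have "\<dots> \<le> t^2 + s^2 - 2 * t * s * co"
      using sum_squares_ge_zero[of "t - s" 0] by (simp add: power2_eq_square algebra_simps)
    finally have le: "\<delta> \<le> t^2 + s^2 - 2 * t * s * co" .
    have "(t^2 + s^2 - 2 * t * s * co) powr (-1/4) \<le> \<delta> powr (-1/4)"
      by (rule powr_mono2'[OF _ d0 le]) simp
    moreover have "\<bar>(\<lambda>z. ((snd z)^2 + (fst z)^2 - 2 * snd z * fst z * co) powr (-1/4)) (s,t)\<bar>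
       = (t^2 + s^2 - 2 * t * s * co) powr (-1/4)" by (simp add: algebra_simps)
    moreover have "0 \<le> \<bar>t - s\<bar> powr (-1/2)" by simp
    ultimately show "\<bar>(\<lambda>z. ((snd z)^2 + (fst z)^2 - 2 * snd z * fst z * co) powr (-1/4)) (s,t)\<bar>
      \<le> \<bar>t - s\<bar> powr (-1/2) + \<delta> powr (-1/4)"
      by linarith
  qed
qed

theorem lemma1:
  fixes c ep em :: "real^2" and \<theta> :: real and p pt q qt :: "real \<Rightarrow> real"
  assumes "norm ep = 1" and "norm em = 1"
    and "ep \<bullet> em = cos (2 * \<theta>)"
    and "0 < 2 * \<theta>" and "2 * \<theta> < 2 * pi"
    and "C0inf_Rplus p" and "C0inf_Rplus pt" and "C0inf_Rplus q" and "C0inf_Rplus qt"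
  shows "A_Gamma_pairing c ep em (Theta_Gamma c ep em p pt) (Theta_Gamma c ep em q qt)
         = A_theta_pairing 1 \<theta> p q + A_theta_pairing (-1) \<theta> pt qt"
proof -
  note nep = assms(1) and nem = assms(2) and inn = assms(3)
  have cne: "cos (2 * \<theta>) \<noteq> 1"
  proof
    assume "cos (2 * \<theta>) = 1"
    then obtain n :: int where n: "2 * \<theta> = real_of_int n * 2 * pi" using cos_one_2pi_int by blast
    have "0 < real_of_int n" using assms(4) n pi_gt_zero by (simp add: zero_less_mult_iff)
    moreover have "real_of_int n < 1" using assms(5) n pi_gt_zero by simp
    ultimately have "0 < n \<and> n < 1" by simp
    then show False by presburger
  qed
  have ec: "em \<bullet> ep = cos (2 * \<theta>)" using inn by (simp add: inner_commute)
  have co: "cos (2 * \<theta>) < 1" using cne cos_le_one[of "2*\<theta>"] by linarith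
  have epne: "ep \<noteq> 0" and emne: "em \<noteq> 0" using nep nem by auto
  have nocross: "c + s *\<^sub>R em \<noteq> c + t *\<^sub>R ep" if "s > 0" "t > 0" for s t
  proof
    assume "c + s *\<^sub>R em = c + t *\<^sub>R ep"
    then have eq: "s *\<^sub>R em = t *\<^sub>R ep" by simp
    then have "norm (s *\<^sub>R em) = norm (t *\<^sub>R ep)" by simp
    then have "s = t" using that nep nem by simp
    then have "em = ep" using eq that by simp
    then have "ep \<bullet> em = 1" using nep by (metis power2_norm_eq_inner one_power2)
    then show False using inn cne by simp
  qed
  have ThP: "Theta_Gamma c ep em f h (c + s *\<^sub>R ep) = (f s + 1 * h s) * (1 / sqrt 2)"
    if "s > 0" for f h s
  proof -
    have "(THE t. t > 0 \<and> c + s *\<^sub>R ep = c + t *\<^sub>R ep) = s"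
      using that epne by (intro the_equality) auto
    then show ?thesis using that unfolding Theta_Gamma_def by auto
  qed
  have ThM: "Theta_Gamma c ep em f h (c + s *\<^sub>R em) = (f s + (-1) * h s) * (1 / sqrt 2)"
    if "s > 0" for f h s
  proof -
    have "(THE t. t > 0 \<and> c + s *\<^sub>R em = c + t *\<^sub>R em) = s"
      using that emne by (intro the_equality) auto
    moreover have "\<not> (\<exists>t>0. c + s *\<^sub>R em = c + t *\<^sub>R ep)" using nocross that by blast
    ultimately show ?thesis using that unfolding Theta_Gamma_def by auto
  qed
  define D :: "(real \<times> real) set" where "D = {0<..}\<times>{0<..}"
  define MM :: "(real \<times> real) measure" where "MM = lborel \<Otimes>\<^sub>M lborel"
  have Ds: "D \<in> sets MM" unfolding D_def MM_def by measurable
  define k0 where "k0 z = \<bar>snd z - fst z\<bar> powr (-1/2)" for z :: "real \<times> real"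
  define k1 where "k1 z = ((snd z)^2 + (fst z)^2 - 2 * snd z * fst z * cos (2 * \<theta>)) powr (-1/4)"
    for z :: "real \<times> real"
  define P where "P s = (p s + 1 * pt s) * (1 / sqrt 2)" for s
  define Pm where "Pm s = (p s + (-1) * pt s) * (1 / sqrt 2)" for s
  define Q where "Q s = (q s + 1 * qt s) * (1 / sqrt 2)" for s
  define Qm where "Qm s = (q s + (-1) * qt s) * (1 / sqrt 2)" for s
  have np: "nice p" "nice pt" "nice q" "nice qt" using assms(6-9) by (auto intro: C0_nice)
  have nP: "nice P" "nice Pm" "nice Q" "nice Qm"
    unfolding P_def Pm_def Q_def Qm_def
    by (rule nice_lin[OF np(1,2)] nice_lin[OF np(3,4)])+
  have I0: "set_integrable MM D (\<lambda>z. f (fst z) * g (snd z) * k0 z)" if "nice f" "nice g" for f g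
    unfolding MM_def D_def k0_def by (rule int0[OF that])
  have I1: "set_integrable MM D (\<lambda>z. f (fst z) * g (snd z) * k1 z)" if "nice f" "nice g" for f g
    unfolding MM_def D_def k1_def by (rule int1[OF that co])
  define h1 where "h1 z = P (fst z) * Q (snd z) * k0 z" for z
  define h2 where "h2 z = P (fst z) * Qm (snd z) * k1 z" for z
  define h3 where "h3 z = Pm (fst z) * Q (snd z) * k1 z" for z
  define h4 where "h4 z = Pm (fst z) * Qm (snd z) * k0 z" for z
  define g1 where "g1 z = p (fst z) * q (snd z) * k0 z" for z
  define g2 where "g2 z = p (fst z) * q (snd z) * k1 z" for z
  define g3 where "g3 z = pt (fst z) * qt (snd z) * k0 z" for z
  define g4 where "g4 z = pt (fst z) * qt (snd z) * k1 z" for z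
  have ih: "set_integrable MM D h1" "set_integrable MM D h2" "set_integrable MM D h3" "set_integrable MM D h4"
    unfolding h1_def h2_def h3_def h4_def using nP by (auto intro: I0 I1)
  have ig: "set_integrable MM D g1" "set_integrable MM D g2" "set_integrable MM D g3" "set_integrable MM D g4"
    unfolding g1_def g2_def g3_def g4_def using np by (auto intro: I0 I1)
  let ?F = "\<lambda>y x. Theta_Gamma c ep em p pt y * Theta_Gamma c ep em q qt x * norm (x - y) powr (-1/2)"
  have L1: "(LINT z:D|MM. ?F (c + fst z *\<^sub>R ep) (c + snd z *\<^sub>R ep)) = (LINT z:D|MM. h1 z)"
    using Ds
  proof (rule set_lebesgue_integral_cong, intro allI impI)
    fix z assume "z \<in> D"
    then obtain s t where z: "z = (s,t)" "0 < s" "0 < t" by (auto simp: D_def)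
    show "?F (c + fst z *\<^sub>R ep) (c + snd z *\<^sub>R ep) = h1 z"
      unfolding z(1) using z(2,3) by (simp add: h1_def ThP P_def Q_def k0_def nsame'[OF nep])
  qed
  have L2: "(LINT z:D|MM. ?F (c + fst z *\<^sub>R ep) (c + snd z *\<^sub>R em)) = (LINT z:D|MM. h2 z)"
    using Ds
  proof (rule set_lebesgue_integral_cong, intro allI impI)
    fix z assume "z \<in> D"
    then obtain s t where z: "z = (s,t)" "0 < s" "0 < t" by (auto simp: D_def)
    show "?F (c + fst z *\<^sub>R ep) (c + snd z *\<^sub>R em) = h2 z"
      unfolding z(1) using z(2,3) by (simp add: h2_def ThP ThM P_def Qm_def k1_def ncross'[OF nem nep] ec)
  qed
  have L3: "(LINT z:D|MM. ?F (c + fst z *\<^sub>R em) (c + snd z *\<^sub>R ep)) = (LINT z:D|MM. h3 z)"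
    using Ds
  proof (rule set_lebesgue_integral_cong, intro allI impI)
    fix z assume "z \<in> D"
    then obtain s t where z: "z = (s,t)" "0 < s" "0 < t" by (auto simp: D_def)
    show "?F (c + fst z *\<^sub>R em) (c + snd z *\<^sub>R ep) = h3 z"
      unfolding z(1) using z(2,3) by (simp add: h3_def ThP ThM Pm_def Q_def k1_def ncross'[OF nep nem] inn)
  qed
  have L4: "(LINT z:D|MM. ?F (c + fst z *\<^sub>R em) (c + snd z *\<^sub>R em)) = (LINT z:D|MM. h4 z)"
    using Ds
  proof (rule set_lebesgue_integral_cong, intro allI impI)
    fix z assume "z \<in> D"
    then obtain s t where z: "z = (s,t)" "0 < s" "0 < t" by (auto simp: D_def)
    show "?F (c + fst z *\<^sub>R em) (c + snd z *\<^sub>R em) = h4 z"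
      unfolding z(1) using z(2,3) by (simp add: h4_def ThM Pm_def Qm_def k0_def nsame'[OF nem])
  qed
  have LHS: "A_Gamma_pairing c ep em (Theta_Gamma c ep em p pt) (Theta_Gamma c ep em q qt)
     = (LINT z:D|MM. h1 z + h2 z + h3 z + h4 z)"
  proof -
    have "A_Gamma_pairing c ep em (Theta_Gamma c ep em p pt) (Theta_Gamma c ep em q qt)
      = (LINT z:D|MM. h1 z) + (LINT z:D|MM. h2 z) + ((LINT z:D|MM. h3 z) + (LINT z:D|MM. h4 z))"
      unfolding A_Gamma_pairing_def Gamma_Gamma_integral_def
      using L1 L2 L3 L4 by (simp add: D_def MM_def)
    also have "\<dots> = (LINT z:D|MM. h1 z + h2 z + h3 z + h4 z)"
      using ih by (simp add: set_integral_add)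
    finally show ?thesis .
  qed
  have R1: "A_theta_pairing 1 \<theta> p q = (LINT z:D|MM. g1 z + g2 z)"
    unfolding A_theta_pairing_def D_def[symmetric] MM_def[symmetric]
    using Ds
  proof (rule set_lebesgue_integral_cong, intro allI impI)
    fix z assume "z \<in> D"
    then have "fst z > 0" "snd z > 0" by (auto simp: D_def)
    then show "(frakK 0 (snd z / fst z) + 1 * frakK \<theta> (snd z / fst z)) * p (fst z) * q (snd z)
          * (fst z * snd z) powr (-1/4) = g1 z + g2 z"
      using Kid0[of "fst z" "snd z"] Kid1[of "fst z" "snd z" \<theta>]
      by (simp add: g1_def g2_def k0_def k1_def algebra_simps)
  qed
  have R2: "A_theta_pairing (-1) \<theta> pt qt = (LINT z:D|MM. g3 z - g4 z)"
    unfolding A_theta_pairing_def D_def[symmetric] MM_def[symmetric]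
    using Ds
  proof (rule set_lebesgue_integral_cong, intro allI impI)
    fix z assume "z \<in> D"
    then have "fst z > 0" "snd z > 0" by (auto simp: D_def)
    then show "(frakK 0 (snd z / fst z) + (-1) * frakK \<theta> (snd z / fst z)) * pt (fst z) * qt (snd z)
          * (fst z * snd z) powr (-1/4) = g3 z - g4 z"
      using Kid0[of "fst z" "snd z"] Kid1[of "fst z" "snd z" \<theta>]
      by (simp add: g3_def g4_def k0_def k1_def algebra_simps)
  qed
  have RHS: "A_theta_pairing 1 \<theta> p q + A_theta_pairing (-1) \<theta> pt qt
      = (LINT z:D|MM. (g1 z + g2 z) + (g3 z - g4 z))"
    unfolding R1 R2 using ig by (simp add: set_integral_add set_integral_diff)
  have "(LINT z:D|MM. h1 z + h2 z + h3 z + h4 z) = (LINT z:D|MM. (g1 z + g2 z) + (g3 z - g4 z))"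
    using Ds
  proof (rule set_lebesgue_integral_cong, intro allI impI)
    fix z assume "z \<in> D"
    have s2: "(1 / sqrt 2) * (1 / sqrt 2) = (1/2::real)" by (simp add: field_simps)
    show "h1 z + h2 z + h3 z + h4 z = (g1 z + g2 z) + (g3 z - g4 z)"
      unfolding h1_def h2_def h3_def h4_def g1_def g2_def g3_def g4_def P_def Pm_def Q_def Qm_def
      by (rule alg[OF s2])
  qed
  then show ?thesis using LHS RHS by simp
qed

end
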